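(* Let $n\ge 3$. The spectral radius of the super compacted matrix $\mathsf{SC}_n$ is the largest real root of the polynomial \[ Q_n(x) = x^{n} - 2(n-1)\sum_{j=1}^{n-1} x^{j} + 1. \]
   Context: The super compacted matrix of rank $n$ is the $n\times n$ matrix $\mathsf{SC}_n=(s_{ij})$ with: $s_{ij}=1$ if ($i\le n-2$ and $j=i+1$) or $i=n$; $s_{ij}=2$ if $i=n-2$ and $j=n$; $s_{ij}=2n-3$ if $i=n-1$ and $j<n$; $s_{ij}=2n-4$ if $i=n-1$ and $j=n$; $s_{ij}=0$ otherwise. *)

theory Defs
  imports "Jordan_Normal_Form.Spectral_Radius"
begin

text \<open>Entries of the super compacted matrix SC_n, with 1-based indices i, j in 1..n.\<close>
definition sc_entry :: "nat \<Rightarrow> nat \<Rightarrow> nat \<Rightarrow> real" where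
  "sc_entry n i j =
     (if (i \<le> n - 2 \<and> j = i + 1) \<or> i = n then 1
      else if i = n - 2 \<and> j = n then 2
      else if i = n - 1 \<and> j < n then 2 * real n - 3
      else if i = n - 1 \<and> j = n then 2 * real n - 4
      else 0)"

text \<open>The super compacted matrix of rank n, as a complex n x n matrix
  (JNF matrices are 0-indexed, hence the shift by one).\<close>
definition SC :: "nat \<Rightarrow> complex mat" where
  "SC n = mat n n (\<lambda>(i, j). complex_of_real (sc_entry n (i + 1) (j + 1)))"

definition Q :: "nat \<Rightarrow> real \<Rightarrow> real" where
  "Q n x = x ^ n - 2 * (real n - 1) * (\<Sum>j = 1..n - 1. x ^ j) + 1"

end

theory Submission
  imports Defs
begin

definition Sg :: "nat \<Rightarrow> real \<Rightarrow> real" where "Sg m x = (\<Sum>k<m+1. x^k)"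
definition bb :: "nat \<Rightarrow> real \<Rightarrow> real" where "bb m x = (Sg m x + x^(m+1))/(x+1)"
definition aa :: "nat \<Rightarrow> real \<Rightarrow> real" where "aa m x = x^(m+1) - 2 * bb m x"
definition vr :: "nat \<Rightarrow> real \<Rightarrow> nat \<Rightarrow> real" where
  "vr m x k = (if k < m+1 then x^k else if k = m+1 then aa m x else bb m x)"

lemma sum_split3:
  fixes f :: "nat \<Rightarrow> 'a::comm_monoid_add"
  shows "(\<Sum>j<m+3. f j) = (\<Sum>j<m+1. f j) + f (m+1) + f (m+2)"
proof -
  have eq: "m+3 = Suc (Suc (Suc m))" by simp
  show ?thesis unfolding eq by (simp add: ac_simps)
qed

lemma geom: "(\<Sum>k<m+1. (x::real)^k) * (x-1) = x^(m+1) - 1"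
  by (induction m) (auto simp: algebra_simps)

lemma pow3: "(x::real)^(m+3) = x*(x*(x*x^m))"
proof -
  have eq: "m+3 = Suc (Suc (Suc m))" by simp
  show ?thesis unfolding eq by (simp only: power_Suc)
qed

lemma sum1: "(\<Sum>j=1..m+2. (x::real)^j) = x * (\<Sum>k<m+1. x^k) + x * x^(m+1)"
proof (induction m)
  case 0 then show ?case by (simp add: numeral_2_eq_2 power2_eq_square)
next
  case (Suc m)
  have "(\<Sum>j=1..Suc m+2. x^j) = (\<Sum>j=1..m+2. x^j) + x^(m+3)"
    by (simp add: add.commute) (metis pow3)
  then show ?case using Suc by (simp add: algebra_simps)
qed

lemma Q_alt: "Q (m+3) x = x^2 * x^(m+1) - 2*(real (m+3) - 1) * (x * Sg m x + x * x^(m+1)) + 1"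
proof -
  have "m+3-1 = m+2" by simp
  moreover have "x^(m+3) = x^2*x^(m+1)" by (simp add: pow3 power2_eq_square)
  ultimately show ?thesis unfolding Q_def Sg_def sum1[symmetric]
    by simp
qed

lemma rows:
  fixes x :: real
  assumes x: "x > 0" and Qx: "Q (m+3) x = 0" and i: "i < m+3"
  shows "(\<Sum>j<m+3. sc_entry (m+3) (i+1) (j+1) * vr m x j) = x * vr m x i"
proof -
  define S where "S = Sg m x"
  define p where "p = x^(m+1)"
  define b where "b = bb m x"
  define a where "a = aa m x"
  define N where "N = real (m+3)"
  have h1: "(x+1)*b = S + p" using x unfolding b_def bb_def S_def p_def by simp
  have ha: "a = p - 2*b" unfolding a_def aa_def b_def p_def by simp
  have hg: "S*(x-1) = p - 1" unfolding S_def Sg_def p_def by (rule geom)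
  have hQ: "x^2 * p - 2*(N - 1) * (x * S + x * p) + 1 = 0"
    using Qx Q_alt[of m x] unfolding S_def p_def N_def by simp
  have row2: "(2*N-3)*(S+a) + (2*N-4)*b = x * a"
  proof -
    define E where "E = (2*N-3)*(S+a) + (2*N-4)*b - x * a"
    have "(x+1)*E = (x+1)*((2*N-3)*(S+p) - x*p) - (2*N-2-2*x)*((x+1)*b)"
      unfolding E_def ha by (simp add: algebra_simps)
    also have "\<dots> = (x+1)*((2*N-3)*(S+p) - x*p) - (2*N-2-2*x)*(S+p)" using h1 by simp
    also have "\<dots> = -(x^2 * p - 2*(N - 1) * (x * S + x * p) + 1) + (S*(x-1) - p + 1)"
      by (simp add: algebra_simps power2_eq_square)
    also have "\<dots> = 0" using hQ hg by simp
    finally have "E = 0" using x by simp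
    then show ?thesis unfolding E_def by simp
  qed
  have vr_lo: "\<And>k. k < m+1 \<Longrightarrow> vr m x k = x^k" unfolding vr_def by simp
  have vr1: "vr m x (m+1) = a" unfolding vr_def a_def by simp
  have vr2: "vr m x (m+2) = b" unfolding vr_def b_def by simp
  consider (lo) "i < m" | (r0) "i = m" | (r1) "i = m+1" | (r2) "i = m+2" using i by linarith
  then show ?thesis
  proof cases
    case lo
    have "(\<Sum>j<m+1. sc_entry (m+3) (i+1) (j+1) * vr m x j) = (\<Sum>j<m+1. if j = i+1 then x^j else 0)"
      by (rule sum.cong) (use lo in \<open>auto simp: sc_entry_def vr_def\<close>)
    also have "\<dots> = x^(i+1)" using lo by simp
    finally show ?thesis using lo by (simp add: sum_split3 sc_entry_def vr_def)
  next
    case r0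
    have "(\<Sum>j<m+1. sc_entry (m+3) (i+1) (j+1) * vr m x j) = 0"
      by (rule sum.neutral) (use r0 in \<open>auto simp: sc_entry_def\<close>)
    then show ?thesis using r0 ha vr1 vr2
      by (simp add: sum_split3 sc_entry_def vr_def p_def)
  next
    case r1
    have "(\<Sum>j<m+1. sc_entry (m+3) (i+1) (j+1) * vr m x j) = (\<Sum>j<m+1. (2*N-3) * x^j)"
      by (rule sum.cong) (use r1 in \<open>auto simp: sc_entry_def vr_def N_def\<close>)
    also have "\<dots> = (2*N-3)*S" unfolding S_def Sg_def by (simp only: sum_distrib_left)
    finally show ?thesis using r1 vr1 vr2 row2
      by (simp add: sum_split3 sc_entry_def N_def algebra_simps)
  next
    case r2
    have "(\<Sum>j<m+1. sc_entry (m+3) (i+1) (j+1) * vr m x j) = S"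
      unfolding S_def Sg_def by (rule sum.cong) (use r2 in \<open>auto simp: sc_entry_def vr_def\<close>)
    then show ?thesis using r2 vr1 vr2 ha h1
      by (simp add: sum_split3 sc_entry_def algebra_simps)
  qed
qed

lemma Qmul: "(x-1) * Q (m+3) x = x^2*x^(m+1)*(x - (2*real(m+3)-1)) + (2*real(m+3)-1)*x - 1"
proof -
  define S where "S = Sg m x"
  define p where "p = x^(m+1)"
  define N where "N = real (m+3)"
  have hg: "S*(x-1) = p - 1" unfolding S_def Sg_def p_def by (rule geom)
  have "(x-1) * Q (m+3) x = (x-1)*(x^2*p) - 2*(N-1)*(x*(S*(x-1)) + x*(x-1)*p) + (x-1)"
    unfolding Q_alt S_def p_def N_def by (simp add: algebra_simps)
  also have "\<dots> = (x-1)*(x^2*p) - 2*(N-1)*(x*(p-1) + x*(x-1)*p) + (x-1)" using hg by simp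
  also have "\<dots> = x^2*p*(x - (2*N-1)) + (2*N-1)*x - 1" by (simp add: algebra_simps power2_eq_square)
  finally show ?thesis unfolding p_def N_def .
qed

lemma perron_bound:
  fixes r :: "nat \<Rightarrow> nat \<Rightarrow> real" and u :: "nat \<Rightarrow> real" and w :: "nat \<Rightarrow> complex"
  assumes rpos: "\<And>i j. i < n \<Longrightarrow> j < n \<Longrightarrow> r i j \<ge> 0"
    and upos: "\<And>i. i < n \<Longrightarrow> u i > 0"
    and ueq: "\<And>i. i < n \<Longrightarrow> (\<Sum>j<n. r i j * u j) = \<rho> * u i"
    and weq: "\<And>i. i < n \<Longrightarrow> (\<Sum>j<n. complex_of_real (r i j) * w j) = lam * w i"
    and wnz: "i0 < n" "w i0 \<noteq> 0"
  shows "norm lam \<le> \<rho>"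
proof -
  define g where "g i = norm (w i) / u i" for i
  have fin: "finite (g ` {..<n})" by simp
  have ne: "g ` {..<n} \<noteq> {}" using wnz by auto
  obtain k where k: "k < n" "g k = Max (g ` {..<n})" using Max_in[OF fin ne] by auto
  define c where "c = g k"
  have gle: "\<And>i. i < n \<Longrightarrow> g i \<le> c" unfolding c_def k(2) using fin by auto
  have "g i0 > 0" using wnz upos[of i0] unfolding g_def by simp
  hence cpos: "c > 0" using gle[OF wnz(1)] by simp
  have wk: "norm (w k) = c * u k" using upos[OF k(1)] unfolding c_def g_def by simp
  have wkpos: "norm (w k) > 0" using wk cpos upos[OF k(1)] by simp
  have wle: "\<And>j. j < n \<Longrightarrow> norm (w j) \<le> c * u j"
    using gle upos unfolding g_def by (simp add: pos_divide_le_eq mult.commute)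
  have "norm lam * norm (w k) = norm (\<Sum>j<n. complex_of_real (r k j) * w j)"
    using weq[OF k(1)] by (simp add: norm_mult)
  also have "\<dots> \<le> (\<Sum>j<n. norm (complex_of_real (r k j) * w j))" by (rule norm_sum)
  also have "\<dots> = (\<Sum>j<n. r k j * norm (w j))"
    by (rule sum.cong) (auto simp: norm_mult rpos k(1))
  also have "\<dots> \<le> (\<Sum>j<n. r k j * (c * u j))"
    by (rule sum_mono) (auto intro: mult_left_mono wle rpos k(1))
  also have "\<dots> = c * (\<Sum>j<n. r k j * u j)" by (simp add: sum_distrib_left algebra_simps)
  also have "\<dots> = \<rho> * norm (w k)" using ueq[OF k(1)] wk by simp
  finally show ?thesis using wkpos by (simp add: mult_le_cancel_right)
qed

lemma row2_lemma:
  fixes x :: real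
  assumes x: "x > 0" and Qx: "Q (m+3) x = 0"
  shows "(2*real(m+3)-3)*(Sg m x + aa m x) + (2*real(m+3)-4)*bb m x = x * aa m x"
proof -
  define S where "S = Sg m x"
  define p where "p = x^(m+1)"
  define b where "b = bb m x"
  define a where "a = aa m x"
  define N where "N = real (m+3)"
  have h1: "(x+1)*b = S + p" using x unfolding b_def bb_def S_def p_def by simp
  have ha: "a = p - 2*b" unfolding a_def aa_def b_def p_def by simp
  have hg: "S*(x-1) = p - 1" unfolding S_def Sg_def p_def by (rule geom)
  have hQ: "x^2 * p - 2*(N - 1) * (x * S + x * p) + 1 = 0"
    using Qx Q_alt[of m x] unfolding S_def p_def N_def by simp
  define E where "E = (2*N-3)*(S+a) + (2*N-4)*b - x * a"
  have "(x+1)*E = (x+1)*((2*N-3)*(S+p) - x*p) - (2*N-2-2*x)*((x+1)*b)"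
    unfolding E_def ha by (simp add: algebra_simps)
  also have "\<dots> = (x+1)*((2*N-3)*(S+p) - x*p) - (2*N-2-2*x)*(S+p)" using h1 by simp
  also have "\<dots> = -(x^2 * p - 2*(N - 1) * (x * S + x * p) + 1) + (S*(x-1) - p + 1)"
    by (simp add: algebra_simps power2_eq_square)
  also have "\<dots> = 0" using hQ hg by simp
  finally have "E = 0" using x by simp
  then show ?thesis unfolding E_def S_def a_def b_def N_def by simp
qed

lemma vr_pos:
  fixes x :: real
  assumes x: "x > 2*real(m+3) - 3" and Qx: "Q (m+3) x = 0" and i: "i < m+3"
  shows "vr m x i > 0"
proof -
  have x0: "x > 0" using x by simp
  have S: "Sg m x > 0" unfolding Sg_def using x0 by (intro sum_pos) auto
  have b: "bb m x > 0" unfolding bb_def using S x0 by (intro divide_pos_pos add_pos_pos) auto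
  have "(x - (2*real(m+3)-3)) * aa m x = (2*real(m+3)-3)*Sg m x + (2*real(m+3)-4)*bb m x"
    using row2_lemma[OF x0 Qx] by (simp add: algebra_simps)
  also have "\<dots> > 0" using S b by (intro add_pos_nonneg) auto
  finally have a: "aa m x > 0" using x by (simp add: zero_less_mult_iff)
  show ?thesis unfolding vr_def using a b x0 by auto
qed

lemma SC_dim: "SC n \<in> carrier_mat n n" unfolding SC_def by simp

lemma SC_mult: assumes "i < n" "dim_vec v = n"
  shows "(SC n *\<^sub>v v) $ i = (\<Sum>j<n. complex_of_real (sc_entry n (i+1) (j+1)) * v $ j)"
  using assms unfolding SC_def by (simp add: scalar_prod_def atLeast0LessThan)

lemma eig_of_root:
  fixes x :: real
  assumes x: "x > 0" and Qx: "Q (m+3) x = 0"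
  shows "complex_of_real x \<in> spectrum (SC (m+3))"
proof -
  define V where "V = vec (m+3) (\<lambda>i. complex_of_real (vr m x i))"
  have "eigenvector (SC (m+3)) V (complex_of_real x)"
    unfolding eigenvector_def
  proof (intro conjI)
    show "V \<in> carrier_vec (dim_row (SC (m + 3)))" unfolding V_def SC_def by simp
    have "V $ 0 = 1" unfolding V_def vr_def by simp
    then show "V \<noteq> 0\<^sub>v (dim_row (SC (m + 3)))" by (auto simp: SC_def)
    show "SC (m + 3) *\<^sub>v V = complex_of_real x \<cdot>\<^sub>v V"
    proof (rule eq_vecI)
      show "dim_vec (SC (m + 3) *\<^sub>v V) = dim_vec (complex_of_real x \<cdot>\<^sub>v V)"
        unfolding V_def SC_def by simp
      fix i assume i: "i < dim_vec (complex_of_real x \<cdot>\<^sub>v V)"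
      hence i': "i < m+3" unfolding V_def by simp
      have "(SC (m + 3) *\<^sub>v V) $ i = (\<Sum>j<m+3. complex_of_real (sc_entry (m+3) (i+1) (j+1)) * V $ j)"
        by (rule SC_mult) (use i' in \<open>auto simp: V_def\<close>)
      also have "\<dots> = (\<Sum>j<m+3. complex_of_real (sc_entry (m+3) (i+1) (j+1) * vr m x j))"
        by (rule sum.cong) (auto simp: V_def)
      also have "\<dots> = complex_of_real (\<Sum>j<m+3. sc_entry (m+3) (i+1) (j+1) * vr m x j)"
        by (simp only: of_real_sum)
      also have "\<dots> = complex_of_real (x * vr m x i)" using rows[OF x Qx i'] by simp
      also have "\<dots> = (complex_of_real x \<cdot>\<^sub>v V) $ i" using i' unfolding V_def by simp
      finally show "(SC (m + 3) *\<^sub>v V) $ i = (complex_of_real x \<cdot>\<^sub>v V) $ i" .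
    qed
  qed
  then show ?thesis unfolding spectrum_def eigenvalue_def by auto
qed

lemma spec_bound:
  fixes \<rho> :: real
  assumes r: "\<rho> > 2*real(m+3) - 3" and Qr: "Q (m+3) \<rho> = 0"
    and lam: "lam \<in> spectrum (SC (m+3))"
  shows "norm lam \<le> \<rho>"
proof -
  let ?n = "m+3"
  have r0: "\<rho> > 0" using r by simp
  obtain W where W: "eigenvector (SC ?n) W lam" using lam unfolding spectrum_def eigenvalue_def by auto
  have Wc: "W \<in> carrier_vec ?n" and Wnz: "W \<noteq> 0\<^sub>v ?n" and We: "SC ?n *\<^sub>v W = lam \<cdot>\<^sub>v W"
    using W SC_dim[of ?n] unfolding eigenvector_def by auto
  have "\<exists>i0. i0 < ?n \<and> W $ i0 \<noteq> 0"
  proof (rule ccontr)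
    assume "\<not> ?thesis"
    hence "\<forall>i<?n. W $ i = 0" by blast
    hence "W = 0\<^sub>v ?n" using Wc by (intro eq_vecI) auto
    with Wnz show False by simp
  qed
  then obtain i0 where i0: "i0 < ?n" "W $ i0 \<noteq> 0" by blast
  show ?thesis
  proof (rule perron_bound[where r = "\<lambda>i j. sc_entry ?n (i+1) (j+1)" and u = "vr m \<rho>"
        and w = "\<lambda>j. W $ j" and n = ?n])
    show "\<And>i j. i < ?n \<Longrightarrow> j < ?n \<Longrightarrow> 0 \<le> sc_entry ?n (i+1) (j+1)"
      unfolding sc_entry_def by auto
    show "\<And>i. i < ?n \<Longrightarrow> 0 < vr m \<rho> i" using vr_pos[OF r Qr] by blast
    show "\<And>i. i < ?n \<Longrightarrow> (\<Sum>j<?n. sc_entry ?n (i+1) (j+1) * vr m \<rho> j) = \<rho> * vr m \<rho> i"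
      using rows[OF r0 Qr] by blast
    show "\<And>i. i < ?n \<Longrightarrow> (\<Sum>j<?n. complex_of_real (sc_entry ?n (i+1) (j+1)) * W $ j) = lam * W $ i"
    proof -
      fix i assume i: "i < ?n"
      have "(SC ?n *\<^sub>v W) $ i = (\<Sum>j<?n. complex_of_real (sc_entry ?n (i+1) (j+1)) * W $ j)"
        by (rule SC_mult) (use i Wc in auto)
      then show "(\<Sum>j<?n. complex_of_real (sc_entry ?n (i+1) (j+1)) * W $ j) = lam * W $ i"
        using We i Wc by simp
    qed
    show "i0 < ?n" "W $ i0 \<noteq> 0" using i0 by auto
  qed
qed

lemma root_exists: "\<exists>\<rho>. \<rho> > 2*real(m+3) - 3 \<and> Q (m+3) \<rho> = 0"
proof -
  define N where "N = real (m+3)"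
  define a0 where "a0 = 2*N - 3"
  define b0 where "b0 = 2*N - 1"
  have N3: "N \<ge> 3" unfolding N_def by simp
  have a3: "a0 \<ge> 3" unfolding a0_def using N3 by simp
  have p1: "a0^(m+1) \<ge> 1" using a3 by (intro one_le_power) simp
  have "(a0-1) * Q (m+3) a0 = a0^2*a0^(m+1)*(a0 - (2*N-1)) + (2*N-1)*a0 - 1"
    using Qmul[of a0 m] unfolding N_def by simp
  also have "\<dots> = -2*a0^2*a0^(m+1) + (a0+2)*a0 - 1" unfolding a0_def by (simp add: algebra_simps)
  also have "\<dots> \<le> -2*a0^2 + (a0+2)*a0 - 1"
  proof -
    have "a0^2 * 1 \<le> a0^2*a0^(m+1)" using p1 by (intro mult_left_mono) auto
    then show ?thesis by simp
  qed
  also have "\<dots> < 0"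
  proof -
    have "-2*a0^2 + (a0+2)*a0 - 1 = -((a0-1)^2)" by (simp add: algebra_simps power2_eq_square)
    moreover have "(a0-1)^2 > 0" using a3 by simp
    ultimately show ?thesis by simp
  qed
  finally have "(a0-1) * Q (m+3) a0 < 0" .
  hence Qa: "Q (m+3) a0 < 0" using a3 by (simp add: mult_less_0_iff)
  have "(b0-1) * Q (m+3) b0 = b0*b0 - 1"
    using Qmul[of b0 m] unfolding N_def b0_def by (simp add: algebra_simps)
  also have "\<dots> > 0"
  proof -
    have b5: "b0 \<ge> 5" using N3 unfolding b0_def by simp
    have "5*5 \<le> b0*b0" by (rule mult_mono) (use b5 in auto)
    then show ?thesis by simp
  qed
  finally have "(b0-1) * Q (m+3) b0 > 0" .
  hence Qb: "Q (m+3) b0 > 0" using N3 unfolding b0_def by (simp add: zero_less_mult_iff)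
  have cont: "continuous_on {a0..b0} (Q (m+3))"
    unfolding Q_def[abs_def] by (intro continuous_intros)
  obtain r where r: "a0 \<le> r" "r \<le> b0" "Q (m+3) r = 0"
    using IVT'[of "Q (m+3)" a0 0 b0] Qa Qb cont unfolding a0_def b0_def by auto
  have "r \<noteq> a0" using r Qa by auto
  with r show ?thesis unfolding a0_def N_def by (intro exI[of _ r]) auto
qed

theorem proposition6p3:
  fixes n :: nat
  assumes "n \<ge> 3"
  shows "Q n (spectral_radius (SC n)) = 0 \<and>
         (\<forall>x::real. Q n x = 0 \<longrightarrow> x \<le> spectral_radius (SC n))"
proof -
  obtain m where n: "n = m + 3" using assms by (metis le_add_diff_inverse2)
  obtain \<rho> where r: "\<rho> > 2*real(m+3) - 3" and Qr: "Q (m+3) \<rho> = 0" using root_exists by blast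
  have r0: "\<rho> > 0" using r by simp
  have SCc: "SC (m+3) \<in> carrier_mat (m+3) (m+3)" by (rule SC_dim)
  have "spectral_radius (SC (m+3)) \<in> norm ` spectrum (SC (m+3))"
    by (rule spectral_radius_mem_max(1)[OF SCc]) simp
  then obtain lam where lam: "lam \<in> spectrum (SC (m+3))" "spectral_radius (SC (m+3)) = norm lam" by auto
  have le1: "spectral_radius (SC (m+3)) \<le> \<rho>" using spec_bound[OF r Qr lam(1)] lam(2) by simp
  have rin: "complex_of_real \<rho> \<in> spectrum (SC (m+3))" by (rule eig_of_root[OF r0 Qr])
  have "norm (complex_of_real \<rho>) \<le> spectral_radius (SC (m+3))"
    by (rule spectral_radius_mem_max(2)[OF SCc]) (simp, rule imageI[OF rin])
  hence le2: "\<rho> \<le> spectral_radius (SC (m+3))" using r0 by simp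
  have SR: "spectral_radius (SC (m+3)) = \<rho>" using le1 le2 by simp
  show ?thesis unfolding n SR
  proof (intro conjI allI impI)
    show "Q (m+3) \<rho> = 0" by (rule Qr)
    fix x assume Qx: "Q (m+3) x = 0"
    show "x \<le> \<rho>"
    proof (cases "x > 0")
      case True
      have "complex_of_real x \<in> spectrum (SC (m+3))" by (rule eig_of_root[OF True Qx])
      from spec_bound[OF r Qr this] True show ?thesis by simp
    next
      case False then show ?thesis using r0 by simp
    qed
  qed
qed

end
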